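(* Let $\Delta\vdash s$ and $\Delta\vdash t$ be closed nominal terms-in-context such that $\Delta\vdash s\approx_\alpha t$. Then $\mathcal{T}(\Delta,s)=\mathcal{T}(\Delta,t)$ (as CRS meta-terms modulo renaming of bound variables).
   Context: Nominal terms over signature $\Sigma$, atoms $\mathcal{A}$, variables $\mathcal{X}$: $s,t ::= a \mid \pi\cdot X \mid [a]s \mid f\,s \mid (s_1,\ldots,s_n)$, with $\pi$ finite-support permutations of atoms (lists of swappings) acting on terms by swapping atom names everywhere (including abstracted ones) and composing with suspended permutations. A freshness context $\Delta$ is a set of constraints $a\#X$. Freshness: $a\#b$; $a\#\pi\cdot X$ if $\pi^{-1}(a)\#X\in\Delta$; $a\#[a]s$; $a\#[b]s$ if $a\#s$; componentwise for function applications and tuples. $\alpha$-equivalence: $a\approx_\alpha a$; $\pi\cdot X\approx_\alpha\pi'\cdot X$ if $a\#X\in\Delta$ for all $a$ with $\pi(a)\neq\pi'(a)$; $[a]s\approx_\alpha[a]t$ if $s\approx_\alpha t$; $[a]s\approx_\alpha[b]t$ if $(b\ a)\cdot s\approx_\alpha t$ and $b\#s$; congruence for function application and tuples. A term-in-context $\Delta\vdash t$ is closed if: (1) every atom occurrence $a$ in $t$ is under an abstraction $[a]$; (2) if $\pi\cdot X$ is in the scope of an abstraction of $\pi(a)$ then every occurrence $\pi'\cdot X$ is in the scope of an abstraction of $\pi'(a)$, or $a\#X\in\Delta$; (3) for two occurrences $\pi_1\cdot X,\pi_2\cdot X$ and $a$ with $\pi_1(a)\neq\pi_2(a)$, if $a$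 is not abstracted in one of the occurrences then $a\#X\in\Delta$. CRS meta-terms: $a\mid Z(t_1,\dots,t_n)\mid[a]t\mid f\,t\mid(t_1,\dots,t_n)$ with meta-variables $Z$, modulo renaming of bound variables. Translation: $\Lambda_t(X)$ is the set of atoms $a$ such that some occurrence of $X$ in $t$ is in the scope of $[a]$. With a fixed total order on atoms, $\mathcal{T}(\Delta,t)$ is obtained from $t$ by replacing each occurrence $\pi\cdot X$ by the meta-application $X(\pi\cdot xs)$, where $xs$ is the ascending list of $\{\pi^{-1}(a)\mid a\in\Lambda_t(X)\}\setminus\{a\mid a\#X\in\Delta\}$ and $\pi\cdot xs$ applies $\pi$ elementwise (no arguments if empty), leaving atoms, abstractions, function applications and tuples unchanged. *)

theory Defs
  imports Main
begin

type_synonym 'a perm = "('a \<times> 'a) list"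

datatype ('a, 'v, 'f) nterm =
    Atom 'a
  | Susp "'a perm" 'v
  | Abs 'a "('a, 'v, 'f) nterm"
  | App 'f "('a, 'v, 'f) nterm"
  | Tup "('a, 'v, 'f) nterm list"

definition swap :: "'a \<Rightarrow> 'a \<Rightarrow> 'a \<Rightarrow> 'a" where
  "swap a b c = (if c = a then b else if c = b then a else c)"

text \<open>The list [(a1,b1),...,(an,bn)] denotes (a1 b1) o ... o (an bn).\<close>
fun perm_apply :: "'a perm \<Rightarrow> 'a \<Rightarrow> 'a" where
  "perm_apply [] c = c"
| "perm_apply ((a, b) # \<pi>) c = swap a b (perm_apply \<pi> c)"

definition perm_inv :: "'a perm \<Rightarrow> 'a perm" where
  "perm_inv \<pi> = rev \<pi>"

fun perm_term :: "'a perm \<Rightarrow> ('a, 'v, 'f) nterm \<Rightarrow> ('a, 'v, 'f) nterm" where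
  "perm_term \<pi> (Atom a) = Atom (perm_apply \<pi> a)"
| "perm_term \<pi> (Susp \<pi>' X) = Susp (\<pi> @ \<pi>') X"
| "perm_term \<pi> (Abs a s) = Abs (perm_apply \<pi> a) (perm_term \<pi> s)"
| "perm_term \<pi> (App f s) = App f (perm_term \<pi> s)"
| "perm_term \<pi> (Tup ts) = Tup (map (perm_term \<pi>) ts)"

text \<open>Freshness contexts: sets of constraints a#X, represented as pairs (a, X).\<close>
type_synonym ('a, 'v) fctx = "('a \<times> 'v) set"

inductive fresh :: "('a, 'v) fctx \<Rightarrow> 'a \<Rightarrow> ('a, 'v, 'f) nterm \<Rightarrow> bool" for \<Delta> where
  fresh_atom: "a \<noteq> b \<Longrightarrow> fresh \<Delta> a (Atom b)"
| fresh_susp: "(perm_apply (perm_inv \<pi>) a, X) \<in> \<Delta> \<Longrightarrow> fresh \<Delta> a (Susp \<pi> X)"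
| fresh_abs_same: "fresh \<Delta> a (Abs a s)"
| fresh_abs: "fresh \<Delta> a s \<Longrightarrow> fresh \<Delta> a (Abs b s)"
| fresh_app: "fresh \<Delta> a s \<Longrightarrow> fresh \<Delta> a (App f s)"
| fresh_tup: "(\<forall>t \<in> set ts. fresh \<Delta> a t) \<Longrightarrow> fresh \<Delta> a (Tup ts)"

inductive alpha :: "('a, 'v) fctx \<Rightarrow> ('a, 'v, 'f) nterm \<Rightarrow> ('a, 'v, 'f) nterm \<Rightarrow> bool"
  for \<Delta> where
  alpha_atom: "alpha \<Delta> (Atom a) (Atom a)"
| alpha_susp: "(\<forall>a. perm_apply \<pi> a \<noteq> perm_apply \<pi>' a \<longrightarrow> (a, X) \<in> \<Delta>)
     \<Longrightarrow> alpha \<Delta> (Susp \<pi> X) (Susp \<pi>' X)"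
| alpha_abs_same: "alpha \<Delta> s t \<Longrightarrow> alpha \<Delta> (Abs a s) (Abs a t)"
| alpha_abs: "alpha \<Delta> (perm_term [(b, a)] s) t \<Longrightarrow> fresh \<Delta> b s
     \<Longrightarrow> alpha \<Delta> (Abs a s) (Abs b t)"
| alpha_app: "alpha \<Delta> s t \<Longrightarrow> alpha \<Delta> (App f s) (App f t)"
| alpha_tup: "list_all2 (alpha \<Delta>) ss ts \<Longrightarrow> alpha \<Delta> (Tup ss) (Tup ts)"

fun atom_occs :: "'a set \<Rightarrow> ('a, 'v, 'f) nterm \<Rightarrow> ('a set \<times> 'a) set" where
  "atom_occs B (Atom a) = {(B, a)}"
| "atom_occs B (Susp \<pi> X) = {}"
| "atom_occs B (Abs a s) = atom_occs (insert a B) s"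
| "atom_occs B (App f s) = atom_occs B s"
| "atom_occs B (Tup ts) = (\<Union>t \<in> set ts. atom_occs B t)"

fun var_occs :: "'a set \<Rightarrow> ('a, 'v, 'f) nterm \<Rightarrow> ('a set \<times> 'a perm \<times> 'v) set" where
  "var_occs B (Atom a) = {}"
| "var_occs B (Susp \<pi> X) = {(B, \<pi>, X)}"
| "var_occs B (Abs a s) = var_occs (insert a B) s"
| "var_occs B (App f s) = var_occs B s"
| "var_occs B (Tup ts) = (\<Union>t \<in> set ts. var_occs B t)"

definition closed :: "('a, 'v) fctx \<Rightarrow> ('a, 'v, 'f) nterm \<Rightarrow> bool" where
  "closed \<Delta> t \<longleftrightarrow>
     (\<forall>(B, a) \<in> atom_occs {} t. a \<in> B) \<and>
     (\<forall>(B, \<pi>, X) \<in> var_occs {} t. \<forall>a. perm_apply \<pi> a \<in> B \<longrightarrow>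
        (\<forall>(B', \<pi>', X') \<in> var_occs {} t. X' = X \<longrightarrow> perm_apply \<pi>' a \<in> B') \<or> (a, X) \<in> \<Delta>) \<and>
     (\<forall>(B1, \<pi>1, X1) \<in> var_occs {} t. \<forall>(B2, \<pi>2, X2) \<in> var_occs {} t. \<forall>a.
        X1 = X2 \<longrightarrow> perm_apply \<pi>1 a \<noteq> perm_apply \<pi>2 a \<longrightarrow>
        (perm_apply \<pi>1 a \<notin> B1 \<or> perm_apply \<pi>2 a \<notin> B2) \<longrightarrow> (a, X1) \<in> \<Delta>)"

datatype ('a, 'v, 'f) mterm =
    MAtom 'a
  | MVar 'v "('a, 'v, 'f) mterm list"
  | MAbs 'a "('a, 'v, 'f) mterm"
  | MApp 'f "('a, 'v, 'f) mterm"
  | MTup "('a, 'v, 'f) mterm list"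

fun mswap :: "'a \<Rightarrow> 'a \<Rightarrow> ('a, 'v, 'f) mterm \<Rightarrow> ('a, 'v, 'f) mterm" where
  "mswap a b (MAtom c) = MAtom (swap a b c)"
| "mswap a b (MVar Z ts) = MVar Z (map (mswap a b) ts)"
| "mswap a b (MAbs c s) = MAbs (swap a b c) (mswap a b s)"
| "mswap a b (MApp f s) = MApp f (mswap a b s)"
| "mswap a b (MTup ts) = MTup (map (mswap a b) ts)"

fun mfv :: "('a, 'v, 'f) mterm \<Rightarrow> 'a set" where
  "mfv (MAtom c) = {c}"
| "mfv (MVar Z ts) = (\<Union>t \<in> set ts. mfv t)"
| "mfv (MAbs c s) = mfv s - {c}"
| "mfv (MApp f s) = mfv s"
| "mfv (MTup ts) = (\<Union>t \<in> set ts. mfv t)"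

inductive malpha :: "('a, 'v, 'f) mterm \<Rightarrow> ('a, 'v, 'f) mterm \<Rightarrow> bool" where
  malpha_atom: "malpha (MAtom a) (MAtom a)"
| malpha_var: "list_all2 malpha ss ts \<Longrightarrow> malpha (MVar Z ss) (MVar Z ts)"
| malpha_abs_same: "malpha s t \<Longrightarrow> malpha (MAbs a s) (MAbs a t)"
| malpha_abs: "malpha (mswap b a s) t \<Longrightarrow> b \<notin> mfv s \<Longrightarrow> malpha (MAbs a s) (MAbs b t)"
| malpha_app: "malpha s t \<Longrightarrow> malpha (MApp f s) (MApp f t)"
| malpha_tup: "list_all2 malpha ss ts \<Longrightarrow> malpha (MTup ss) (MTup ts)"

text \<open>Lambda_t(X): atoms a such that some occurrence of X in t is in the scope of [a].\<close>
definition Lam :: "('a, 'v, 'f) nterm \<Rightarrow> 'v \<Rightarrow> 'a set" where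
  "Lam t X = \<Union>{B. \<exists>\<pi>. (B, \<pi>, X) \<in> var_occs {} t}"

fun tr :: "('a::linorder, 'v) fctx \<Rightarrow> ('v \<Rightarrow> 'a set) \<Rightarrow> ('a, 'v, 'f) nterm \<Rightarrow> ('a, 'v, 'f) mterm" where
  "tr \<Delta> L (Atom a) = MAtom a"
| "tr \<Delta> L (Susp \<pi> X) = MVar X (map (\<lambda>b. MAtom (perm_apply \<pi> b))
      (sorted_list_of_set ((\<lambda>a. perm_apply (perm_inv \<pi>) a) ` L X - {a. (a, X) \<in> \<Delta>})))"
| "tr \<Delta> L (Abs a s) = MAbs a (tr \<Delta> L s)"
| "tr \<Delta> L (App f s) = MApp f (tr \<Delta> L s)"
| "tr \<Delta> L (Tup ts) = MTup (map (tr \<Delta> L) ts)"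

definition translate :: "('a::linorder, 'v) fctx \<Rightarrow> ('a, 'v, 'f) nterm \<Rightarrow> ('a, 'v, 'f) mterm" where
  "translate \<Delta> t = tr \<Delta> (Lam t) t"

end

theory Submission
  imports Defs
begin

fun trB :: "('a::linorder, 'v) fctx \<Rightarrow> 'a set \<Rightarrow> ('a, 'v, 'f) nterm \<Rightarrow> ('a, 'v, 'f) mterm" where
  "trB \<Delta> B (Atom a) = MAtom a"
| "trB \<Delta> B (Susp \<pi> X) = MVar X (map (\<lambda>b. MAtom (perm_apply \<pi> b))
      (sorted_list_of_set ((\<lambda>a. perm_apply (perm_inv \<pi>) a) ` B - {a. (a, X) \<in> \<Delta>})))"
| "trB \<Delta> B (Abs a s) = MAbs a (trB \<Delta> (insert a B) s)"
| "trB \<Delta> B (App f s) = MApp f (trB \<Delta> B s)"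
| "trB \<Delta> B (Tup ts) = MTup (map (trB \<Delta> B) ts)"

lemma swap_swap[simp]: "swap a b (swap a b c) = c"
  by (simp add: swap_def)

lemma perm_apply_append[simp]: "perm_apply (xs @ ys) c = perm_apply xs (perm_apply ys c)"
  by (induction xs arbitrary: c) auto

lemma perm_inv_left[simp]: "perm_apply (rev p) (perm_apply p c) = c"
  by (induction p arbitrary: c) auto

lemma perm_inv_right[simp]: "perm_apply p (perm_apply (rev p) c) = c"
  using perm_inv_left[of "rev p" c] by simp

lemma swap_image_iff: "c \<in> swap b a ` B \<longleftrightarrow> swap b a c \<in> B"
  by (metis image_iff swap_swap)

lemma set_sorted_sub: "set (sorted_list_of_set A) \<subseteq> A"
  by (cases "finite A") auto

lemma tr_trB:
  "(\<forall>(Bo, \<pi>, X) \<in> var_occs B s. (\<lambda>a. perm_apply (perm_inv \<pi>) a) ` L X - {a. (a, X) \<in> \<Delta>}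
       = (\<lambda>a. perm_apply (perm_inv \<pi>) a) ` Bo - {a. (a, X) \<in> \<Delta>})
   \<Longrightarrow> tr \<Delta> L s = trB \<Delta> B s"
proof (induction s arbitrary: B)
  case (Tup ts)
  then show ?case by (fastforce intro!: map_cong)
qed auto

lemma fresh_eqvt: "fresh \<Delta> c s \<Longrightarrow> fresh \<Delta> (perm_apply p c) (perm_term p s)"
proof (induction rule: fresh.induct)
  case (fresh_atom a b)
  then show ?case
    by (metis fresh.fresh_atom perm_inv_left perm_term.simps(1))
next
  case (fresh_susp \<pi> a X)
  then show ?case by (auto intro!: fresh.fresh_susp simp: perm_inv_def)
next
  case (fresh_tup ts a)
  then show ?case by (auto intro!: fresh.fresh_tup)
qed (auto intro: fresh.intros)

lemma trB_eqvt:
  "mswap b a (trB \<Delta> C s) = trB \<Delta> (swap b a ` C) (perm_term [(b, a)] s)"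
proof (induction s arbitrary: C)
  case (Susp \<pi> X)
  have "(\<lambda>x. perm_apply (perm_inv ((b, a) # \<pi>)) x) ` (swap b a ` C)
        = (\<lambda>x. perm_apply (perm_inv \<pi>) x) ` C"
    by (force simp: perm_inv_def image_image)
  then show ?case by (simp add: comp_def)
qed (auto simp: image_insert)

lemma fresh_mfv: "fresh \<Delta> c s \<Longrightarrow> c \<notin> mfv (trB \<Delta> C s)"
proof (induction arbitrary: C rule: fresh.induct)
  case (fresh_susp \<pi> a X)
  show ?case
  proof
    assume "a \<in> mfv (trB \<Delta> C (Susp \<pi> X))"
    then obtain x where x: "x \<in> set (sorted_list_of_set ((\<lambda>a. perm_apply (perm_inv \<pi>) a) ` C - {a. (a, X) \<in> \<Delta>}))"
      and ax: "a = perm_apply \<pi> x" by auto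
    from x set_sorted_sub have "(x, X) \<notin> \<Delta>" by blast
    moreover have "perm_apply (perm_inv \<pi>) a = x" using ax by (simp add: perm_inv_def)
    ultimately show False using fresh_susp by simp
  qed
qed auto

lemma fresh_abs_inv: "fresh \<Delta> c (Abs a s) \<Longrightarrow> c \<noteq> a \<Longrightarrow> fresh \<Delta> c s"
  by (cases rule: fresh.cases) auto

lemma fresh_susp_inv: "fresh \<Delta> c (Susp \<pi> X) \<Longrightarrow> (perm_apply (perm_inv \<pi>) c, X) \<in> \<Delta>"
  by (cases rule: fresh.cases) auto

lemma fresh_app_inv: "fresh \<Delta> c (App f s) \<Longrightarrow> fresh \<Delta> c s"
  by (cases rule: fresh.cases) auto

lemma fresh_tup_inv: "fresh \<Delta> c (Tup ts) \<Longrightarrow> t \<in> set ts \<Longrightarrow> fresh \<Delta> c t"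
  by (cases rule: fresh.cases) auto

lemma malpha_refl: "malpha m m"
proof (induction m)
  case (MVar x1 x2)
  then show ?case by (auto intro!: malpha_var list.rel_refl_strong)
next
  case (MTup x)
  then show ?case by (auto intro!: malpha_tup list.rel_refl_strong)
qed (auto intro: malpha.intros)

lemma main_alpha:
  "alpha \<Delta> s t \<Longrightarrow> (\<forall>c. \<not> fresh \<Delta> c s \<longrightarrow> (c \<in> B \<longleftrightarrow> c \<in> B'))
   \<Longrightarrow> malpha (trB \<Delta> B s) (trB \<Delta> B' t)"
proof (induction arbitrary: B B' rule: alpha.induct)
  case (alpha_atom a)
  then show ?case by (simp add: malpha_atom)
next
  case (alpha_susp \<pi> \<pi>' X)
  let ?D = "{a. (a, X) \<in> \<Delta>}"
  have agree: "(x, X) \<notin> \<Delta> \<Longrightarrow> perm_apply \<pi> x = perm_apply \<pi>' x" for x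
    using alpha_susp.hyps by blast
  have nf: "(x, X) \<notin> \<Delta> \<Longrightarrow> (perm_apply \<pi> x \<in> B \<longleftrightarrow> perm_apply \<pi> x \<in> B')" for x
  proof -
    assume nx: "(x, X) \<notin> \<Delta>"
    have "\<not> fresh \<Delta> (perm_apply \<pi> x) (Susp \<pi> X)"
    proof
      assume "fresh \<Delta> (perm_apply \<pi> x) (Susp \<pi> X)"
      hence "(perm_apply (perm_inv \<pi>) (perm_apply \<pi> x), X) \<in> \<Delta>" by (rule fresh_susp_inv)
      thus False using nx by (simp add: perm_inv_def)
    qed
    thus ?thesis by (rule mp[OF spec[OF alpha_susp.prems]])
  qed
  have seteq: "(\<lambda>a. perm_apply (perm_inv \<pi>) a) ` B - ?D = (\<lambda>a. perm_apply (perm_inv \<pi>') a) ` B' - ?D"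
  proof (intro equalityI subsetI)
    fix x assume "x \<in> (\<lambda>a. perm_apply (perm_inv \<pi>) a) ` B - ?D"
    then obtain c where c: "c \<in> B" "x = perm_apply (rev \<pi>) c" "(x, X) \<notin> \<Delta>"
      by (auto simp: perm_inv_def)
    hence "perm_apply \<pi> x = c" by simp
    hence "c \<in> B'" "perm_apply \<pi>' x = c" using nf[OF c(3)] agree[OF c(3)] c(1) by auto
    thus "x \<in> (\<lambda>a. perm_apply (perm_inv \<pi>') a) ` B' - ?D"
      using c(3) by (auto simp: perm_inv_def intro!: image_eqI[where x=c])
  next
    fix x assume "x \<in> (\<lambda>a. perm_apply (perm_inv \<pi>') a) ` B' - ?D"
    then obtain c where c: "c \<in> B'" "x = perm_apply (rev \<pi>') c" "(x, X) \<notin> \<Delta>"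
      by (auto simp: perm_inv_def)
    hence "perm_apply \<pi>' x = c" by simp
    hence "perm_apply \<pi> x = c" using agree[OF c(3)] by simp
    hence "c \<in> B" using nf[OF c(3)] c(1) by auto
    thus "x \<in> (\<lambda>a. perm_apply (perm_inv \<pi>) a) ` B - ?D"
      using c(3) \<open>perm_apply \<pi> x = c\<close> by (auto simp: perm_inv_def intro!: image_eqI[where x=c])
  qed
  let ?L = "sorted_list_of_set ((\<lambda>a. perm_apply (perm_inv \<pi>) a) ` B - ?D)"
  have "map (\<lambda>b. MAtom (perm_apply \<pi> b)) ?L = map (\<lambda>b. MAtom (perm_apply \<pi>' b)) ?L"
  proof (rule map_cong[OF refl])
    fix x assume "x \<in> set ?L"
    hence "(x, X) \<notin> \<Delta>" using set_sorted_sub by blast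
    thus "MAtom (perm_apply \<pi> x) = MAtom (perm_apply \<pi>' x)" using agree by simp
  qed
  hence eq: "trB \<Delta> B (Susp \<pi> X) = trB \<Delta> B' (Susp \<pi>' X)" using seteq by simp
  show ?case unfolding eq by (rule malpha_refl)
next
  case (alpha_abs_same s t a)
  have "c \<in> insert a B \<longleftrightarrow> c \<in> insert a B'" if nf: "\<not> fresh \<Delta> c s" for c
  proof (cases "c = a")
    case True
    then show ?thesis by simp
  next
    case False
    have "\<not> fresh \<Delta> c (Abs a s)"
    proof
      assume "fresh \<Delta> c (Abs a s)"
      from fresh_abs_inv[OF this False] nf show False by simp
    qed
    hence "c \<in> B \<longleftrightarrow> c \<in> B'" by (rule mp[OF spec[OF alpha_abs_same.prems]])
    thus ?thesis using False by simp
  qed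
  hence "malpha (trB \<Delta> (insert a B) s) (trB \<Delta> (insert a B') t)"
    by (intro alpha_abs_same.IH allI impI)
  then show ?case unfolding trB.simps by (rule malpha_abs_same)
next
  case (alpha_abs b a s t)
  let ?C = "swap b a ` insert a B"
  have "swap b a a = b" by (simp add: swap_def)
  hence C: "?C = insert b (swap b a ` B)" by (simp only: image_insert)
  have "\<forall>c. \<not> fresh \<Delta> c (perm_term [(b, a)] s) \<longrightarrow> (c \<in> ?C \<longleftrightarrow> c \<in> insert b B')"
  proof (intro allI impI)
    fix c assume nf: "\<not> fresh \<Delta> c (perm_term [(b, a)] s)"
    show "c \<in> ?C \<longleftrightarrow> c \<in> insert b B'"
    proof (cases "c = b")
      case True then show ?thesis unfolding C by simp
    next
      case False
      have "\<not> fresh \<Delta> (swap b a c) s"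
      proof
        assume "fresh \<Delta> (swap b a c) s"
        from fresh_eqvt[OF this, of "[(b,a)]"] nf show False by simp
      qed
      moreover have "c \<noteq> a"
      proof
        assume "c = a"
        hence "swap b a c = b" by (simp add: swap_def)
        thus False using calculation alpha_abs.hyps(2) by simp
      qed
      moreover have "swap b a c = c" using False \<open>c \<noteq> a\<close> by (simp add: swap_def)
      ultimately have "\<not> fresh \<Delta> c s" by simp
      hence "\<not> fresh \<Delta> c (Abs a s)"
        using fresh_abs_inv[OF _ \<open>c \<noteq> a\<close>, of \<Delta> s] by (rule contrapos_nn)
      hence h1: "c \<in> B \<longleftrightarrow> c \<in> B'" by (rule mp[OF spec[OF alpha_abs.prems]])
      have h2: "c \<in> swap b a ` B \<longleftrightarrow> c \<in> B"
        using \<open>swap b a c = c\<close> by (simp add: swap_image_iff)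
      show ?thesis unfolding C insert_iff h2 h1 by (rule refl)
    qed
  qed
  hence "malpha (trB \<Delta> ?C (perm_term [(b, a)] s)) (trB \<Delta> (insert b B') t)"
    by (rule alpha_abs.IH)
  hence "malpha (mswap b a (trB \<Delta> (insert a B) s)) (trB \<Delta> (insert b B') t)"
    by (simp only: trB_eqvt)
  moreover have "b \<notin> mfv (trB \<Delta> (insert a B) s)" using fresh_mfv alpha_abs.hyps(2) by blast
  ultimately show ?case unfolding trB.simps by (rule malpha_abs)
next
  case (alpha_app s t f)
  have "\<forall>c. \<not> fresh \<Delta> c s \<longrightarrow> (c \<in> B \<longleftrightarrow> c \<in> B')"
  proof (intro allI impI)
    fix c assume "\<not> fresh \<Delta> c s"
    hence "\<not> fresh \<Delta> c (App f s)" using fresh_app_inv[of \<Delta> c f s] by (rule contrapos_nn)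
    thus "c \<in> B \<longleftrightarrow> c \<in> B'" by (rule mp[OF spec[OF alpha_app.prems]])
  qed
  hence "malpha (trB \<Delta> B s) (trB \<Delta> B' t)" by (rule alpha_app.IH)
  then show ?case unfolding trB.simps by (rule malpha_app)
next
  case (alpha_tup ss ts)
  have "list_all2 malpha (map (trB \<Delta> B) ss) (map (trB \<Delta> B') ts)"
    unfolding list.rel_map
  proof (rule list.rel_mono_strong[OF alpha_tup.IH])
    fix x y assume "x \<in> set ss" "y \<in> set ts" and xy: "alpha \<Delta> x y \<and> (\<forall>B B'. (\<forall>c. \<not> fresh \<Delta> c x \<longrightarrow> (c \<in> B) = (c \<in> B'))
           \<longrightarrow> malpha (trB \<Delta> B x) (trB \<Delta> B' y))"
    have "\<forall>c. \<not> fresh \<Delta> c x \<longrightarrow> (c \<in> B) = (c \<in> B')"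
    proof (intro allI impI)
      fix c assume "\<not> fresh \<Delta> c x"
      hence "\<not> fresh \<Delta> c (Tup ss)"
        using fresh_tup_inv[OF _ \<open>x \<in> set ss\<close>, of \<Delta> c] by (rule contrapos_nn)
      thus "(c \<in> B) = (c \<in> B')" by (rule mp[OF spec[OF alpha_tup.prems]])
    qed
    thus "malpha (trB \<Delta> B x) (trB \<Delta> B' y)" using xy by (intro mp[OF spec[OF spec[OF conjunct2[OF xy]]]])
  qed
  then show ?case unfolding trB.simps by (rule malpha_tup)
qed

lemma closed_c2:
  assumes "closed \<Delta> s" "(B, \<pi>, X) \<in> var_occs {} s" "perm_apply \<pi> a \<in> B"
    "(B', \<pi>', X) \<in> var_occs {} s" "(a, X) \<notin> \<Delta>"
  shows "perm_apply \<pi>' a \<in> B'"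
proof -
  have "\<forall>(B, \<pi>, X) \<in> var_occs {} s. \<forall>a. perm_apply \<pi> a \<in> B \<longrightarrow>
        (\<forall>(B', \<pi>', X') \<in> var_occs {} s. X' = X \<longrightarrow> perm_apply \<pi>' a \<in> B') \<or> (a, X) \<in> \<Delta>"
    using assms(1) unfolding closed_def by (rule conjunct1[OF conjunct2])
  hence "case (B, \<pi>, X) of (B, \<pi>, X) \<Rightarrow> \<forall>a. perm_apply \<pi> a \<in> B \<longrightarrow>
        (\<forall>(B', \<pi>', X') \<in> var_occs {} s. X' = X \<longrightarrow> perm_apply \<pi>' a \<in> B') \<or> (a, X) \<in> \<Delta>"
    using assms(2) by (rule bspec)
  hence "(\<forall>(B', \<pi>', X') \<in> var_occs {} s. X' = X \<longrightarrow> perm_apply \<pi>' a \<in> B') \<or> (a, X) \<in> \<Delta>"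
    using assms(3) by simp
  hence "\<forall>(B', \<pi>', X') \<in> var_occs {} s. X' = X \<longrightarrow> perm_apply \<pi>' a \<in> B'"
    using assms(5) by blast
  hence "case (B', \<pi>', X) of (B', \<pi>', X') \<Rightarrow> X' = X \<longrightarrow> perm_apply \<pi>' a \<in> B'"
    using assms(4) by (rule bspec)
  thus ?thesis by simp
qed

lemma closed_c3:
  assumes "closed \<Delta> s" "(B1, \<pi>1, X) \<in> var_occs {} s" "(B2, \<pi>2, X) \<in> var_occs {} s"
    "perm_apply \<pi>1 a \<noteq> perm_apply \<pi>2 a" "perm_apply \<pi>1 a \<notin> B1 \<or> perm_apply \<pi>2 a \<notin> B2"
  shows "(a, X) \<in> \<Delta>"
proof -
  have "\<forall>(B1, \<pi>1, X1) \<in> var_occs {} s. \<forall>(B2, \<pi>2, X2) \<in> var_occs {} s. \<forall>a.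
        X1 = X2 \<longrightarrow> perm_apply \<pi>1 a \<noteq> perm_apply \<pi>2 a \<longrightarrow>
        (perm_apply \<pi>1 a \<notin> B1 \<or> perm_apply \<pi>2 a \<notin> B2) \<longrightarrow> (a, X1) \<in> \<Delta>"
    using assms(1) unfolding closed_def by (rule conjunct2[OF conjunct2])
  hence "case (B1, \<pi>1, X) of (B1, \<pi>1, X1) \<Rightarrow> \<forall>(B2, \<pi>2, X2) \<in> var_occs {} s. \<forall>a.
        X1 = X2 \<longrightarrow> perm_apply \<pi>1 a \<noteq> perm_apply \<pi>2 a \<longrightarrow>
        (perm_apply \<pi>1 a \<notin> B1 \<or> perm_apply \<pi>2 a \<notin> B2) \<longrightarrow> (a, X1) \<in> \<Delta>"
    using assms(2) by (rule bspec)
  hence "\<forall>(B2, \<pi>2, X2) \<in> var_occs {} s. \<forall>a.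
        X = X2 \<longrightarrow> perm_apply \<pi>1 a \<noteq> perm_apply \<pi>2 a \<longrightarrow>
        (perm_apply \<pi>1 a \<notin> B1 \<or> perm_apply \<pi>2 a \<notin> B2) \<longrightarrow> (a, X) \<in> \<Delta>" by simp
  hence "case (B2, \<pi>2, X) of (B2, \<pi>2, X2) \<Rightarrow> \<forall>a.
        X = X2 \<longrightarrow> perm_apply \<pi>1 a \<noteq> perm_apply \<pi>2 a \<longrightarrow>
        (perm_apply \<pi>1 a \<notin> B1 \<or> perm_apply \<pi>2 a \<notin> B2) \<longrightarrow> (a, X) \<in> \<Delta>"
    using assms(3) by (rule bspec)
  thus ?thesis using assms(4,5) by simp
qed

lemma closed_occ:
  assumes "closed \<Delta> s" and occ: "(Bo, \<pi>, X) \<in> var_occs {} s"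
  shows "(\<lambda>a. perm_apply (perm_inv \<pi>) a) ` Lam s X - {a. (a, X) \<in> \<Delta>}
       = (\<lambda>a. perm_apply (perm_inv \<pi>) a) ` Bo - {a. (a, X) \<in> \<Delta>}"
proof -
  {
    fix c assume c: "c \<in> Lam s X" and nx: "(perm_apply (perm_inv \<pi>) c, X) \<notin> \<Delta>"
    let ?x = "perm_apply (perm_inv \<pi>) c"
    from c obtain B' \<pi>' where occ': "(B', \<pi>', X) \<in> var_occs {} s" and cB: "c \<in> B'"
      unfolding Lam_def by blast
    have px: "perm_apply \<pi> ?x = c" by (simp add: perm_inv_def)
    have "c \<in> Bo"
    proof (cases "perm_apply \<pi> ?x = perm_apply \<pi>' ?x")
      case True
      hence "perm_apply \<pi>' ?x \<in> B'" using px cB by simp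
      from closed_c2[OF assms(1) occ' this occ nx] px show ?thesis by simp
    next
      case False
      show ?thesis
      proof (rule ccontr)
        assume "c \<notin> Bo"
        hence "(?x, X) \<in> \<Delta>" using closed_c3[OF assms(1) occ occ' False] px by simp
        thus False using nx by simp
      qed
    qed
    hence "?x \<in> (\<lambda>a. perm_apply (perm_inv \<pi>) a) ` Bo" by blast
  }
  note * = this
  have sub: "Bo \<subseteq> Lam s X" using occ unfolding Lam_def by blast
  show ?thesis
  proof (intro equalityI subsetI)
    fix x assume x: "x \<in> (\<lambda>a. perm_apply (perm_inv \<pi>) a) ` Lam s X - {a. (a, X) \<in> \<Delta>}"
    then obtain c where c: "c \<in> Lam s X" "x = perm_apply (perm_inv \<pi>) c" by blast
    have nx: "(x, X) \<notin> \<Delta>" using x by simp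
    have "x \<in> (\<lambda>a. perm_apply (perm_inv \<pi>) a) ` Bo" using *[OF c(1)] nx c(2) by simp
    thus "x \<in> (\<lambda>a. perm_apply (perm_inv \<pi>) a) ` Bo - {a. (a, X) \<in> \<Delta>}" using nx by simp
  next
    fix x assume "x \<in> (\<lambda>a. perm_apply (perm_inv \<pi>) a) ` Bo - {a. (a, X) \<in> \<Delta>}"
    thus "x \<in> (\<lambda>a. perm_apply (perm_inv \<pi>) a) ` Lam s X - {a. (a, X) \<in> \<Delta>}"
      using sub by blast
  qed
qed

lemma closed_translate:
  assumes "closed \<Delta> s"
  shows "translate \<Delta> s = trB \<Delta> {} s"
  unfolding translate_def
  apply (rule tr_trB)
  apply clarify
  apply (rule closed_occ[OF assms])
  apply assumption
  done

theorem mainTheorem4: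
  fixes \<Delta> :: "('a::linorder, 'v) fctx" and s t :: "('a, 'v, 'f) nterm"
  assumes "infinite (UNIV :: 'a set)"
    and "closed \<Delta> s" and "closed \<Delta> t"
    and "alpha \<Delta> s t"
  shows "malpha (translate \<Delta> s) (translate \<Delta> t)"
  using closed_translate[OF assms(2)] closed_translate[OF assms(3)]
    main_alpha[OF assms(4), of "{}" "{}"] by simp

end
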